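(* Let $f(z)=\sum_{n=0}^\infty a_n z^n$ and $g(z)=\sum_{n=0}^\infty b_n z^n$ be analytic in $\mathbb{D}$ with $f\prec g$. Then for all $0\le r\le 1/3$, $$\sum_{n=0}^\infty |a_n|r^n+\left(\frac{1}{1+|a_0|}+\frac{r}{1-r}\right)\sum_{n=1}^{\infty}|a_n|^2r^{2n}\le \sum_{n=0}^\infty |b_n|r^n+\left(\frac{1}{1+|a_0|}+\frac{r}{1-r}\right)\sum_{n=1}^{\infty}|b_n|^2r^{2n}.$$
   Context: $\mathbb{D}$ is the open unit disk. $f\prec g$ (subordination) means there is an analytic $\omega:\mathbb{D}\to\mathbb{D}$ with $\omega(0)=0$ and $f=g\circ\omega$ on $\mathbb{D}$. *)

theory Defs
  imports "HOL-Complex_Analysis.Complex_Analysis"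
begin

definition subordinate :: "(complex \<Rightarrow> complex) \<Rightarrow> (complex \<Rightarrow> complex) \<Rightarrow> bool" where
  "subordinate f g \<longleftrightarrow>
     (\<exists>w. w holomorphic_on ball 0 1 \<and> w ` ball 0 1 \<subseteq> ball 0 1 \<and> w 0 = 0 \<and>
          (\<forall>z\<in>ball 0 1. f z = g (w z)))"

end

theory Submission
  imports Defs
begin


lemma int_cis:
  fixes j :: int
  shows "((\<lambda>t. cis (of_int j * t)) has_integral (if j = 0 then 2*pi else 0)) {0..2*pi}"
proof (cases "j = 0")
  case True then show ?thesis
    using has_integral_const_real[of "1::complex" 0 "2*pi"] by (simp add: scaleR_conv_of_real)
next
  case False
  define F where "F t = inverse (\<i> * of_int j) * cis (of_int j * t)" for t
  have d: "(F has_vector_derivative cis (of_int j * t)) (at t within {0..2*pi})" for t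
  proof -
    have "((\<lambda>t. cis (of_int j * t)) has_derivative (\<lambda>h. (of_int j * h) *\<^sub>R (\<i> * cis (of_int j * t)))) (at t within {0..2*pi})"
      by (intro has_derivative_cis derivative_intros)
    then have "(F has_derivative (\<lambda>h. inverse (\<i> * of_int j) * ((of_int j * h) *\<^sub>R (\<i> * cis (of_int j * t))))) (at t within {0..2*pi})"
      unfolding F_def by (rule has_derivative_mult_right)
    then show ?thesis unfolding has_vector_derivative_def
      using False by (simp add: scaleR_conv_of_real field_simps)
  qed
  have "((\<lambda>t. cis (of_int j * t)) has_integral (F (2*pi) - F 0)) {0..2*pi}"
    by (rule fundamental_theorem_of_calculus) (use d in auto)
  moreover have "F (2*pi) = F 0"
  proof -
    have "cis (of_int j * (2*pi)) = 1"
      using cis_multiple_2pi[of "of_int j"] by (simp add: mult_ac)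
    then show ?thesis by (simp add: F_def)
  qed
  ultimately show ?thesis using False by simp
qed

lemma termwise_integral:
  fixes F :: "nat \<Rightarrow> real \<Rightarrow> complex"
  assumes cont: "\<And>n. continuous_on {a..b} (F n)"
    and bound: "\<And>n t. t \<in> {a..b} \<Longrightarrow> norm (F n t) \<le> M n" and M: "summable M"
    and I: "\<And>n. (F n has_integral I n) {a..b}"
  shows "I sums integral {a..b} (\<lambda>t. \<Sum>n. F n t)"
    "((\<lambda>t. \<Sum>n. F n t) has_integral (\<Sum>n. I n)) {a..b}"
proof -
  have u: "uniform_limit {a..b} (\<lambda>N t. \<Sum>i<N. F i t) (\<lambda>t. \<Sum>n. F n t) sequentially"
    by (rule Weierstrass_m_test[OF bound M])
  obtain I' J where I': "\<And>N. ((\<lambda>t. \<Sum>i<N. F i t) has_integral I' N) {a..b}"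
    and J: "((\<lambda>t. \<Sum>n. F n t) has_integral J) {a..b}" and lim: "(I' \<longlongrightarrow> J) sequentially"
    by (rule uniform_limit_integral[OF u]) (auto intro!: continuous_on_sum cont)
  have "I' N = (\<Sum>i<N. I i)" for N
    using has_integral_unique[OF I'[of N] has_integral_sum[OF _ I]] by simp
  then have "I' = (\<lambda>N. \<Sum>i<N. I i)" by (rule ext)
  with lim have s: "I sums J" unfolding sums_def by simp
  then show "I sums integral {a..b} (\<lambda>t. \<Sum>n. F n t)" using J integral_unique by metis
  show "((\<lambda>t. \<Sum>n. F n t) has_integral (\<Sum>n. I n)) {a..b}" using J s sums_unique by metis
qed

lemma fourier_coeff:
  fixes c :: "nat \<Rightarrow> complex" and m :: int
  assumes sm: "summable (\<lambda>n. norm (c n) * \<rho> ^ n)" and rho: "0 \<le> \<rho>"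
    and h: "\<And>t. (\<lambda>n. c n * (of_real \<rho> * cis t) ^ n) sums h t"
  shows "((\<lambda>t. h t * cis (of_int m * t)) has_integral
           (if m \<le> 0 then 2 * pi * c (nat (-m)) * \<rho> ^ nat (-m) else 0)) {0..2*pi}"
proof -
  define F where "F n t = c n * (of_real \<rho> * cis t) ^ n * cis (of_int m * t)" for n t
  define I where "I n = (if int n + m = 0 then 2 * pi * c n * \<rho> ^ n else 0)" for n
  have Feq: "F n t = (c n * \<rho> ^ n) * cis (of_int (int n + m) * t)" for n t
  proof -
    have "(of_real \<rho> * cis t) ^ n = of_real (\<rho> ^ n) * cis (real n * t)"
      by (simp only: power_mult_distrib Complex.DeMoivre of_real_power)
    moreover have "cis (real n * t) * cis (of_int m * t) = cis (of_int (int n + m) * t)"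
      by (simp add: cis_mult algebra_simps)
    ultimately show ?thesis unfolding F_def by (simp add: mult_ac)
  qed
  have FI: "(F n has_integral I n) {0..2*pi}" for n
  proof -
    have "((\<lambda>t. (c n * \<rho> ^ n) * cis (of_int (int n + m) * t)) has_integral
        (c n * \<rho> ^ n) * (if int n + m = 0 then 2*pi else 0)) {0..2*pi}"
      by (rule has_integral_mult_right[OF int_cis])
    then show ?thesis unfolding Feq[abs_def] I_def
      by (cases "int n + m = 0") (simp_all add: mult_ac)
  qed
  have bd: "norm (F n t) \<le> norm (c n) * \<rho> ^ n" for n t
    unfolding Feq using rho by (simp add: norm_mult norm_power)
  have cont: "continuous_on {0..2*pi} (F n)" for n
    unfolding F_def by (intro continuous_intros)
  have int1: "((\<lambda>t. \<Sum>n. F n t) has_integral (\<Sum>n. I n)) {0..2*pi}"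
    by (rule termwise_integral(2)[OF cont bd sm FI])
  have "(\<Sum>n. F n t) = h t * cis (of_int m * t)" for t
    unfolding F_def by (rule sums_unique[symmetric], intro sums_mult2 h)
  then have eq: "(\<lambda>t. \<Sum>n. F n t) = (\<lambda>t. h t * cis (of_int m * t))" by (rule ext)
  have sumI: "(\<Sum>n. I n) = (if m \<le> 0 then 2 * pi * c (nat (-m)) * \<rho> ^ nat (-m) else 0)"
  proof (cases "m \<le> 0")
    case True
    have "I = (\<lambda>n. if n = nat (-m) then 2 * pi * c n * \<rho> ^ n else 0)"
      using True by (intro ext) (auto simp: I_def)
    then show ?thesis using True sums_single sums_unique by metis
  next
    case False
    then have "I = (\<lambda>n. 0)" by (auto simp: I_def)
    then show ?thesis using False by simp
  qed
  show ?thesis using int1 unfolding eq sumI by (simp only: of_real_power)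
qed


lemma parseval:
  fixes c :: "nat \<Rightarrow> complex"
  assumes sm: "summable (\<lambda>n. norm (c n) * \<rho> ^ n)" and rho: "0 \<le> \<rho>"
    and h: "\<And>t. (\<lambda>n. c n * (of_real \<rho> * cis t) ^ n) sums h t"
    and cont: "continuous_on {0..2*pi} h"
  shows "((\<lambda>t. norm (h t) ^ 2) has_integral (2 * pi * (\<Sum>n. norm (c n) ^ 2 * \<rho> ^ (2 * n)))) {0..2*pi}"
    "summable (\<lambda>n. norm (c n) ^ 2 * \<rho> ^ (2 * n))"
proof -
  define B where "B = (\<Sum>n. norm (c n) * \<rho> ^ n)"
  have hB: "norm (h t) \<le> B" for t
  proof -
    have "norm (h t) = norm (\<Sum>n. c n * (of_real \<rho> * cis t) ^ n)"
      using h sums_unique by metis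
    also have "\<dots> \<le> (\<Sum>n. norm (c n * (of_real \<rho> * cis t) ^ n))"
      by (rule summable_norm) (use sm rho in \<open>simp add: norm_mult norm_power\<close>)
    also have "\<dots> = B" using rho by (simp add: B_def norm_mult norm_power)
    finally show ?thesis .
  qed
  define F where "F n t = (cnj (c n) * \<rho> ^ n) * (h t * cis (of_int (- int n) * t))" for n t
  define I where "I n = (cnj (c n) * \<rho> ^ n) * (2 * pi * c n * \<rho> ^ n)" for n
  have FI: "(F n has_integral I n) {0..2*pi}" for n
  proof -
    have "((\<lambda>t. h t * cis (of_int (- int n) * t)) has_integral (2 * pi * c n * \<rho> ^ n)) {0..2*pi}"
      using fourier_coeff[OF sm rho h, of "- int n"] by simp
    then show ?thesis unfolding F_def[abs_def] I_def by (rule has_integral_mult_right)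
  qed
  have bd: "norm (F n t) \<le> norm (c n) * \<rho> ^ n * B" for n t
    unfolding F_def using rho hB[of t]
    by (simp add: norm_mult norm_power mult_left_mono)
  have smB: "summable (\<lambda>n. norm (c n) * \<rho> ^ n * B)" using sm by (rule summable_mult2)
  have contF: "continuous_on {0..2*pi} (F n)" for n
    unfolding F_def by (intro continuous_intros cont)
  have Fsum: "(\<Sum>n. F n t) = h t * cnj (h t)" for t
  proof -
    have S: "(\<lambda>n. cnj (c n * (of_real \<rho> * cis t) ^ n)) sums cnj (h t)"
      by (subst sums_cnj) (rule h)
    have E: "cnj (c n * (of_real \<rho> * cis t) ^ n) = cnj (c n) * \<rho> ^ n * cis (of_int (- int n) * t)" for n
    proof -
      have "cnj (c n * (of_real \<rho> * cis t) ^ n) = cnj (c n) * (of_real \<rho>) ^ n * cnj (cis t) ^ n"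
        by (simp only: complex_cnj_mult complex_cnj_power complex_cnj_complex_of_real power_mult_distrib mult.assoc)
      also have "cnj (cis t) ^ n = cis (of_int (- int n) * t)"
        by (simp only: cis_cnj Complex.DeMoivre) simp
      finally show ?thesis by (simp only: of_real_power)
    qed
    have "(\<lambda>n. cnj (c n) * \<rho> ^ n * cis (of_int (- int n) * t)) sums cnj (h t)"
      using S unfolding E .
    then have "(\<lambda>n. h t * (cnj (c n) * \<rho> ^ n * cis (of_int (- int n) * t))) sums (h t * cnj (h t))"
      by (rule sums_mult)
    then show ?thesis unfolding F_def by (simp add: sums_iff mult_ac)
  qed
  then have eq: "(\<lambda>t. \<Sum>n. F n t) = (\<lambda>t. of_real (norm (h t) ^ 2))"
    by (intro ext) (simp only: Fsum complex_norm_square)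
  have Ieq: "I n = of_real (2 * pi * (norm (c n) ^ 2 * \<rho> ^ (2 * n)))" for n
  proof -
    have "cnj (c n) * c n = of_real (norm (c n) ^ 2)" by (simp only: complex_norm_square mult.commute)
    then show ?thesis unfolding I_def by (simp add: power_mult power2_eq_square mult_ac)
  qed
  have s: "I sums integral {0..2*pi} (\<lambda>t. \<Sum>n. F n t)"
    by (rule termwise_integral(1)[OF contF bd smB FI])
  have hi: "((\<lambda>t. \<Sum>n. F n t) has_integral (\<Sum>n. I n)) {0..2*pi}"
    by (rule termwise_integral(2)[OF contF bd smB FI])
  have R: "Re (I n) = 2 * pi * (norm (c n) ^ 2 * \<rho> ^ (2 * n))" for n
    by (simp only: Ieq Re_complex_of_real)
  have "(\<lambda>n. Re (I n)) sums Re (\<Sum>n. I n)"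
    using sums_Re[OF summable_sums[OF sums_summable[OF s]]] .
  then have s2: "(\<lambda>n. 2 * pi * (norm (c n) ^ 2 * \<rho> ^ (2 * n))) sums Re (\<Sum>n. I n)"
    unfolding R .
  then have sum2: "summable (\<lambda>n. norm (c n) ^ 2 * \<rho> ^ (2 * n))"
    using summable_cmult_iff[of "2*pi"] sums_summable by fastforce
  then show "summable (\<lambda>n. norm (c n) ^ 2 * \<rho> ^ (2 * n))" .
  have "Re (\<Sum>n. I n) = 2 * pi * (\<Sum>n. norm (c n) ^ 2 * \<rho> ^ (2 * n))"
    using sums_unique[OF s2] suminf_mult[OF sum2, of "2*pi"] by simp
  moreover have "((\<lambda>t. Re (of_real (norm (h t) ^ 2))) has_integral Re (\<Sum>n. I n)) {0..2*pi}"
    using has_integral_linear[OF hi[unfolded eq] bounded_linear_Re] by (simp add: o_def)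
  ultimately show "((\<lambda>t. norm (h t) ^ 2) has_integral (2 * pi * (\<Sum>n. norm (c n) ^ 2 * \<rho> ^ (2 * n)))) {0..2*pi}"
    by simp
qed



abbreviation cf :: "(complex \<Rightarrow> complex) \<Rightarrow> nat \<Rightarrow> complex" where
  "cf h n \<equiv> fps_nth (fps_expansion h 0) n"

lemma hol_sums:
  assumes "h holomorphic_on ball 0 1" "z \<in> ball 0 1"
  shows "(\<lambda>n. cf h n * z ^ n) sums h z"
  using holomorphic_power_series[OF assms] by (simp add: fps_expansion_def)

lemma hol_fps:
  assumes "h holomorphic_on ball 0 1"
  shows "h has_fps_expansion fps_expansion h 0"
  by (rule analytic_at_imp_has_fps_expansion_0 holomorphic_on_imp_analytic_at[OF assms])+ auto

lemma hol_abs_summable: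
  assumes "h holomorphic_on ball 0 1" "0 \<le> \<rho>" "\<rho> < 1"
  shows "summable (\<lambda>n. norm (cf h n) * \<rho> ^ n)"
proof -
  define x where "x = (1+\<rho>)/2"
  have x: "\<rho> < x" "x < 1" "0 \<le> x" using assms by (simp_all add: x_def)
  let ?z = "of_real x :: complex"
  have "?z \<in> ball 0 1" using x by simp
  from sums_summable[OF hol_sums[OF assms(1) this]]
  have "summable (\<lambda>n. norm (cf h n * (of_real \<rho>) ^ n))"
    by (rule powser_insidea) (use assms x in simp)
  then show ?thesis using assms by (simp add: norm_mult norm_power)
qed

lemma hol_parseval:
  assumes h: "h holomorphic_on ball 0 1" and r: "0 \<le> \<rho>" "\<rho> < 1"
  shows "((\<lambda>t. norm (h (of_real \<rho> * cis t)) ^ 2) has_integral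
            (2 * pi * (\<Sum>n. norm (cf h n) ^ 2 * \<rho> ^ (2 * n)))) {0..2*pi}"
    "summable (\<lambda>n. norm (cf h n) ^ 2 * \<rho> ^ (2 * n))"
proof -
  have s: "(\<lambda>n. cf h n * (of_real \<rho> * cis t) ^ n) sums h (of_real \<rho> * cis t)" for t
    by (rule hol_sums[OF h]) (use r in \<open>simp add: norm_mult\<close>)
  have c: "continuous_on {0..2*pi} (\<lambda>t. h (of_real \<rho> * cis t))"
    by (rule continuous_on_compose2[OF holomorphic_on_imp_continuous_on[OF h]])
       (use r in \<open>auto intro!: continuous_intros simp: norm_mult\<close>)
  show "((\<lambda>t. norm (h (of_real \<rho> * cis t)) ^ 2) has_integral
            (2 * pi * (\<Sum>n. norm (cf h n) ^ 2 * \<rho> ^ (2 * n)))) {0..2*pi}"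
    "summable (\<lambda>n. norm (cf h n) ^ 2 * \<rho> ^ (2 * n))"
    using parseval[OF hol_abs_summable[OF h r] r(1) s c] by auto
qed

lemma contraction:
  assumes w: "w holomorphic_on ball 0 1" and q: "q holomorphic_on ball 0 1"
    and r: "0 \<le> \<rho>" "\<rho> < 1"
    and wb: "\<And>t. norm (w (of_real \<rho> * cis t)) \<le> \<rho>"
  shows "(\<Sum>n. norm (fps_nth (fps_expansion w 0 * fps_expansion q 0) n) ^ 2 * \<rho> ^ (2 * n))
           \<le> \<rho> ^ 2 * (\<Sum>n. norm (cf q n) ^ 2 * \<rho> ^ (2 * n))"
    "summable (\<lambda>n. norm (fps_nth (fps_expansion w 0 * fps_expansion q 0) n) ^ 2 * \<rho> ^ (2 * n))"
proof -
  define p where "p z = w z * q z" for z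
  have hp: "p holomorphic_on ball 0 1" unfolding p_def by (intro holomorphic_intros w q)
  have "p has_fps_expansion fps_expansion w 0 * fps_expansion q 0"
    unfolding p_def by (intro has_fps_expansion_mult hol_fps w q)
  then have pe: "fps_expansion p 0 = fps_expansion w 0 * fps_expansion q 0"
    by (rule fps_expansion_eqI)
  have ip: "((\<lambda>t. norm (p (of_real \<rho> * cis t)) ^ 2) has_integral
            (2 * pi * (\<Sum>n. norm (cf p n) ^ 2 * \<rho> ^ (2 * n)))) {0..2*pi}"
    by (rule hol_parseval[OF hp r])
  have iq: "((\<lambda>t. \<rho>^2 * norm (q (of_real \<rho> * cis t)) ^ 2) has_integral
            \<rho>^2 * (2 * pi * (\<Sum>n. norm (cf q n) ^ 2 * \<rho> ^ (2 * n)))) {0..2*pi}"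
    by (rule has_integral_mult_right[OF hol_parseval(1)[OF q r]])
  have le: "norm (p (of_real \<rho> * cis t)) ^ 2 \<le> \<rho>^2 * norm (q (of_real \<rho> * cis t)) ^ 2" for t
  proof -
    have "norm (p (of_real \<rho> * cis t)) = norm (w (of_real \<rho> * cis t)) * norm (q (of_real \<rho> * cis t))"
      by (simp add: p_def norm_mult)
    also have "\<dots> \<le> \<rho> * norm (q (of_real \<rho> * cis t))"
      by (rule mult_right_mono[OF wb]) simp
    finally show ?thesis
      by (metis norm_ge_zero power_mono power_mult_distrib)
  qed
  have "2 * pi * (\<Sum>n. norm (cf p n) ^ 2 * \<rho> ^ (2 * n)) \<le> \<rho>^2 * (2 * pi * (\<Sum>n. norm (cf q n) ^ 2 * \<rho> ^ (2 * n)))"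
    by (rule has_integral_le[OF ip iq le])
  then show "(\<Sum>n. norm (fps_nth (fps_expansion w 0 * fps_expansion q 0) n) ^ 2 * \<rho> ^ (2 * n))
           \<le> \<rho> ^ 2 * (\<Sum>n. norm (cf q n) ^ 2 * \<rho> ^ (2 * n))" unfolding pe by (simp add: algebra_simps)
  show "summable (\<lambda>n. norm (fps_nth (fps_expansion w 0 * fps_expansion q 0) n) ^ 2 * \<rho> ^ (2 * n))"
    using hol_parseval(2)[OF hp r] unfolding pe .
qed


lemma cf0: "cf h 0 = h 0"
  by (simp add: fps_expansion_def)

lemma carath_rho:
  assumes w: "w holomorphic_on ball 0 1" and w0: "w 0 = 0"
    and wb: "\<And>z. norm z < 1 \<Longrightarrow> norm (w z) \<le> norm z"
    and k: "2 \<le> k" and r: "0 < \<rho>" "\<rho> < 1"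
  shows "norm (cf w k) * \<rho> ^ (k - 1) \<le> 2 * (1 - norm (cf w 1))"
proof -
  define c where "c = cf w"
  have c0: "c 0 = 0" using w0 by (simp add: c_def cf0)
  define h where "h t = w (of_real \<rho> * cis t)" for t
  have s: "(\<lambda>n. c n * (of_real \<rho> * cis t) ^ n) sums h t" for t
    unfolding c_def h_def by (rule hol_sums[OF w]) (use r in \<open>simp add: norm_mult\<close>)
  have sm: "summable (\<lambda>n. norm (c n) * \<rho> ^ n)"
    unfolding c_def by (rule hol_abs_summable[OF w]) (use r in auto)
  note F = fourier_coeff[OF sm less_imp_le[OF r(1)] s]
  have hb: "norm (h t) \<le> \<rho>" for t
    unfolding h_def using wb[of "of_real \<rho> * cis t"] r by (simp add: norm_mult)
  define \<sigma> where "\<sigma> = (if c 1 = 0 then 1 else cnj (c 1) / norm (c 1))"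
  have n\<sigma>: "norm \<sigma> = 1" by (simp add: \<sigma>_def norm_divide)
  have \<sigma>c: "\<sigma> * c 1 = of_real (norm (c 1))"
  proof (cases "c 1 = 0")
    case False
    have "cnj (c 1) * c 1 = of_real (norm (c 1) ^ 2)" by (simp only: complex_norm_square mult.commute)
    then show ?thesis using False by (simp add: \<sigma>_def power2_eq_square)
  qed (simp add: \<sigma>_def)
  define u where "u t = \<sigma> / of_real \<rho> * (h t * cis (of_int (-1) * t))" for t
  have nu: "norm (u t) \<le> 1" for t
  proof -
    have "norm (u t) = norm (h t) / \<rho>" using r by (simp add: u_def norm_mult norm_divide n\<sigma>)
    also have "\<dots> \<le> 1" using hb[of t] r by simp
    finally show ?thesis .
  qed
  define j where "j = k - 1"
  have j: "1 \<le> j" "k = Suc j" using k by (auto simp: j_def)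
  have U1: "(u has_integral (2 * pi * norm (c 1))) {0..2*pi}"
  proof -
    have "((\<lambda>t. \<sigma> / of_real \<rho> * (h t * cis (of_int (-1) * t))) has_integral
        \<sigma> / of_real \<rho> * (2 * pi * c 1 * \<rho> ^ 1)) {0..2*pi}"
      using has_integral_mult_right[OF F[of "-1"], of "\<sigma> / of_real \<rho>"] by simp
    moreover have "\<sigma> / of_real \<rho> * (2 * pi * c 1 * \<rho> ^ 1) = 2 * pi * norm (c 1)"
      using r \<sigma>c by (simp add: field_simps)
    ultimately show ?thesis unfolding u_def[abs_def] by simp
  qed
  have Uj: "((\<lambda>t. u t * cis (of_int (- int j) * t)) has_integral
              (\<sigma> * 2 * pi * c k * \<rho> ^ j)) {0..2*pi}"
  proof -
    have e: "u t * cis (of_int (- int j) * t) = \<sigma> / of_real \<rho> * (h t * cis (of_int (- int k) * t))" for t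
      unfolding u_def using j by (simp add: cis_mult algebra_simps)
    have "((\<lambda>t. \<sigma> / of_real \<rho> * (h t * cis (of_int (- int k) * t))) has_integral
        \<sigma> / of_real \<rho> * (2 * pi * c k * \<rho> ^ k)) {0..2*pi}"
      using has_integral_mult_right[OF F[of "- int k"], of "\<sigma> / of_real \<rho>"] by simp
    moreover have "\<sigma> / of_real \<rho> * (2 * pi * c k * \<rho> ^ k) = \<sigma> * 2 * pi * c k * \<rho> ^ j"
      using r j by (simp add: field_simps)
    ultimately show ?thesis unfolding e by simp
  qed
  have Cj: "((\<lambda>t. cnj (u t) * cis (of_int (- int j) * t)) has_integral 0) {0..2*pi}"
  proof -
    have e: "cnj (u t) * cis (of_int (- int j) * t) = cnj (\<sigma> / of_real \<rho> * (h t * cis (of_int (int j - 1) * t)))" for t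
      unfolding u_def by (simp add: cis_cnj cis_mult algebra_simps)
    have "((\<lambda>t. \<sigma> / of_real \<rho> * (h t * cis (of_int (int j - 1) * t))) has_integral
        \<sigma> / of_real \<rho> * 0) {0..2*pi}"
      using has_integral_mult_right[OF F[of "int j - 1"], of "\<sigma> / of_real \<rho>"] j c0
      by (simp split: if_splits)
    from has_integral_linear[OF this bounded_linear_cnj]
    show ?thesis unfolding e by (simp add: o_def)
  qed
  have E: "((\<lambda>t. cis (of_int (- int j) * t)) has_integral 0) {0..2*pi}"
    using int_cis[of "- int j"] j by simp
  define v where "v t = 1 - Re (u t)" for t
  have Vc: "of_real (v t) = 1 - (u t + cnj (u t)) / 2" for t
    by (simp add: v_def complex_add_cnj)
  have VI: "((\<lambda>t. of_real (v t) * cis (of_int (- int j) * t)) has_integral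
              (0 - (\<sigma> * 2 * pi * c k * \<rho> ^ j + 0) / 2)) {0..2*pi}"
  proof -
    have e: "of_real (v t) * cis (of_int (- int j) * t) =
       cis (of_int (- int j) * t) - (u t * cis (of_int (- int j) * t) + cnj (u t) * cis (of_int (- int j) * t)) / 2" for t
      unfolding Vc by (simp add: algebra_simps)
    show ?thesis unfolding e
      by (intro has_integral_diff E has_integral_divide has_integral_add Uj Cj)
  qed
  have C1: "((\<lambda>t. cnj (u t)) has_integral cnj (2 * pi * norm (c 1))) {0..2*pi}"
    using has_integral_linear[OF U1 bounded_linear_cnj] by (simp add: o_def)
  have V1: "((\<lambda>t. 1 - (u t + cnj (u t)) / 2) has_integral (2 * pi - (2 * pi * norm (c 1) + cnj (2 * pi * norm (c 1))) / 2)) {0..2*pi}"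
    by (intro has_integral_diff has_integral_divide has_integral_add U1 C1)
       (use has_integral_const_real[of "1::complex" 0 "2*pi"] in \<open>simp add: scaleR_conv_of_real\<close>)
  have X: "((Re \<circ> (\<lambda>t. 1 - (u t + cnj (u t)) / 2)) has_integral Re (2 * pi - (2 * pi * norm (c 1) + cnj (2 * pi * norm (c 1))) / 2)) {0..2*pi}"
    by (rule has_integral_linear[OF V1 bounded_linear_Re])
  have e1: "(Re \<circ> (\<lambda>t. 1 - (u t + cnj (u t)) / 2)) = v"
    by (rule ext) (simp add: v_def)
  have e2: "Re (2 * pi - (2 * pi * norm (c 1) + cnj (2 * pi * norm (c 1))) / 2) = 2 * pi * (1 - norm (c 1))"
    by (simp add: algebra_simps)
  have vR: "(v has_integral (2 * pi * (1 - norm (c 1)))) {0..2*pi}"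
    using X unfolding e1 e2 .
  have bnd: "norm (integral {0..2*pi} (\<lambda>t. of_real (v t) * cis (of_int (- int j) * t)))
       \<le> integral {0..2*pi} v"
  proof (rule integral_norm_bound_integral)
    show "(\<lambda>t. of_real (v t) * cis (of_int (- int j) * t)) integrable_on {0..2*pi}"
      using VI by blast
    show "v integrable_on {0..2*pi}" using vR by blast
    fix t
    have "Re (u t) \<le> 1" using nu[of t] complex_Re_le_cmod[of "u t"] by linarith
    then have "0 \<le> v t" by (simp add: v_def)
    then show "norm (of_real (v t) * cis (of_int (- int j) * t)) \<le> v t"
      by (simp add: norm_mult)
  qed
  then have "norm ((0 - (\<sigma> * 2 * pi * c k * \<rho> ^ j + 0) / 2)) \<le> 2 * pi * (1 - norm (c 1))"
    using integral_unique[OF VI] integral_unique[OF vR] by simp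
  then have "pi * (norm (c k) * \<rho> ^ j) \<le> pi * (2 * (1 - norm (c 1)))"
    using r by (simp add: norm_mult norm_divide n\<sigma> norm_power)
  then show ?thesis unfolding c_def j_def by simp
qed


lemma carath:
  assumes w: "w holomorphic_on ball 0 1" and w0: "w 0 = 0"
    and wb: "\<And>z. norm z < 1 \<Longrightarrow> norm (w z) \<le> norm z"
    and k: "2 \<le> k"
  shows "norm (cf w k) \<le> 2 * (1 - norm (cf w 1))"
proof -
  have ev: "eventually (\<lambda>\<rho>. norm (cf w k) * \<rho> ^ (k - 1) \<le> 2 * (1 - norm (cf w 1))) (at_left (1::real))"
  proof -
    have "eventually (\<lambda>x. x \<in> {0<..<1}) (at_left (1::real))" by (rule eventually_at_left_real) simp
    then show ?thesis by eventually_elim (use carath_rho[OF w w0 wb k] in simp)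
  qed
  have lim: "((\<lambda>\<rho>. norm (cf w k) * \<rho> ^ (k - 1)) \<longlongrightarrow> norm (cf w k) * 1 ^ (k - 1)) (at_left (1::real))"
    by (intro tendsto_intros)
  have "norm (cf w k) * 1 ^ (k - 1) \<le> 2 * (1 - norm (cf w 1))"
    by (rule tendsto_le[OF _ tendsto_const lim ev]) simp
  then show ?thesis by simp
qed

lemma geom_le:
  fixes \<rho> :: real
  assumes "0 \<le> \<rho>" "\<rho> \<le> 1/3"
  shows "(\<Sum>i<N. \<rho> ^ i) \<le> 3/2"
proof -
  have "(\<Sum>i<N. \<rho> ^ i) = (1 - \<rho> ^ N) / (1 - \<rho>)"
    using assms by (subst sum_gp_strict) auto
  also have "\<dots> \<le> 1 / (1 - \<rho>)"
    using assms by (intro divide_right_mono) auto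
  also have "\<dots> \<le> 3/2" using assms by (simp add: field_simps)
  finally show ?thesis .
qed

lemma bohr_w:
  assumes w: "w holomorphic_on ball 0 1" and w0: "w 0 = 0"
    and wb: "\<And>z. norm z < 1 \<Longrightarrow> norm (w z) \<le> norm z"
    and c1: "norm (cf w 1) \<le> 1"
    and r: "0 \<le> \<rho>" "\<rho> \<le> 1/3"
  shows "(\<Sum>k<N. norm (cf w k) * \<rho> ^ k) \<le> \<rho>"
proof -
  define A where "A = norm (cf w 1)"
  define e where "e k = (if k = 0 then 0 else if k = 1 then A * \<rho> else 2 * (1 - A) * \<rho> ^ k)" for k
  have A: "0 \<le> A" "A \<le> 1" using c1 by (auto simp: A_def)
  have e0: "0 \<le> e k" for k using A r by (simp add: e_def)
  have ce: "norm (cf w k) * \<rho> ^ k \<le> e k" for k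
  proof -
    consider "k = 0" | "k = 1" | "2 \<le> k" by linarith
    then show ?thesis
    proof cases
      case 1 then show ?thesis using w0 by (simp add: e_def cf0)
    next
      case 2 then show ?thesis by (simp add: e_def A_def)
    next
      case 3
      then show ?thesis using carath[OF w w0 wb 3] r
        by (simp add: e_def A_def mult_right_mono)
    qed
  qed
  have "(\<Sum>k<N. norm (cf w k) * \<rho> ^ k) \<le> (\<Sum>k<N. e k)"
    by (rule sum_mono) (rule ce)
  also have "\<dots> \<le> (\<Sum>k<Suc (Suc N). e k)"
    by (rule sum_mono2) (auto simp: e0)
  also have "\<dots> = e 0 + (e 1 + (\<Sum>k<N. e (Suc (Suc k))))"
    by (simp only: sum.lessThan_Suc_shift One_nat_def)
  also have "(\<Sum>k<N. e (Suc (Suc k))) = (\<Sum>k<N. (2 * (1 - A) * \<rho>^2) * \<rho> ^ k)"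
    by (intro sum.cong) (auto simp: e_def power2_eq_square)
  also have "\<dots> = 2 * (1 - A) * \<rho>^2 * (\<Sum>k<N. \<rho> ^ k)"
    by (simp only: sum_distrib_left)
  also have "e 0 + (e 1 + 2 * (1 - A) * \<rho>^2 * (\<Sum>k<N. \<rho> ^ k)) = A * \<rho> + (1 - A) * (2 * \<rho>^2 * (\<Sum>k<N. \<rho> ^ k))"
    by (simp add: e_def mult_ac)
  also have "\<dots> \<le> A * \<rho> + (1 - A) * \<rho>"
  proof -
    have G: "(\<Sum>k<N. \<rho> ^ k) \<le> 3/2" by (rule geom_le[OF r])
    have "2 * \<rho> * (\<Sum>k<N. \<rho> ^ k) \<le> 2 * (1/3) * (3/2)"
      using r G by (intro mult_mono) (auto intro: sum_nonneg)
    then have "\<rho> * (2 * \<rho> * (\<Sum>k<N. \<rho> ^ k)) \<le> \<rho> * 1"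
      using r by (intro mult_left_mono) auto
    then have "2 * \<rho>^2 * (\<Sum>k<N. \<rho> ^ k) \<le> \<rho>" by (simp add: power2_eq_square mult_ac)
    then show ?thesis using A by (intro add_left_mono mult_left_mono) auto
  qed
  also have "\<dots> = \<rho>" by (simp add: algebra_simps)
  finally show ?thesis .
qed



definition N1 :: "real \<Rightarrow> nat \<Rightarrow> complex fps \<Rightarrow> real" where
  "N1 \<rho> N Q = (\<Sum>k<N. norm (fps_nth Q k) * \<rho> ^ k)"

definition N2 :: "real \<Rightarrow> nat \<Rightarrow> complex fps \<Rightarrow> real" where
  "N2 \<rho> N Q = (\<Sum>k<N. norm (fps_nth Q k) ^ 2 * \<rho> ^ (2 * k))"

lemma N1_nonneg: "0 \<le> \<rho> \<Longrightarrow> 0 \<le> N1 \<rho> N Q"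
  unfolding N1_def by (intro sum_nonneg) auto

lemma N1_add: "0 \<le> \<rho> \<Longrightarrow> N1 \<rho> N (P + Q) \<le> N1 \<rho> N P + N1 \<rho> N Q"
  unfolding N1_def sum.distrib[symmetric]
  by (intro sum_mono) (auto simp: distrib_right[symmetric] intro!: mult_right_mono norm_triangle_ineq)

lemma N1_cmult: "N1 \<rho> N (fps_const c * Q) = norm c * N1 \<rho> N Q"
  unfolding N1_def by (simp add: sum_distrib_left norm_mult mult_ac)

lemma N1_sum: fixes M :: nat shows "0 \<le> \<rho> \<Longrightarrow> N1 \<rho> N (\<Sum>i<M. P i) \<le> (\<Sum>i<M. N1 \<rho> N (P i))"
proof (induction M)
  case 0 then show ?case by (simp add: N1_def)
next
  case (Suc M)
  then show ?case using N1_add[OF Suc.prems, where P="\<Sum>i<M. P i" and Q="P M" and N=N] by simp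
qed

lemma N1_mult:
  assumes r: "0 \<le> \<rho>"
  shows "N1 \<rho> N (P * Q) \<le> N1 \<rho> N P * N1 \<rho> N Q"
proof -
  have "N1 \<rho> N (P * Q) \<le> (\<Sum>k<N. \<Sum>i\<le>k. (norm (fps_nth P i) * \<rho> ^ i) * (norm (fps_nth Q (k - i)) * \<rho> ^ (k - i)))"
  proof (unfold N1_def, rule sum_mono)
    fix k assume "k \<in> {..<N}"
    have "norm (fps_nth (P * Q) k) \<le> (\<Sum>i\<le>k. norm (fps_nth P i) * norm (fps_nth Q (k - i)))"
      unfolding fps_mult_nth atLeast0AtMost
      by (rule order_trans[OF norm_sum]) (simp add: norm_mult)
    then have "norm (fps_nth (P * Q) k) * \<rho> ^ k \<le> (\<Sum>i\<le>k. norm (fps_nth P i) * norm (fps_nth Q (k - i))) * \<rho> ^ k"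
      using r by (intro mult_right_mono) auto
    also have "\<dots> = (\<Sum>i\<le>k. (norm (fps_nth P i) * \<rho> ^ i) * (norm (fps_nth Q (k - i)) * \<rho> ^ (k - i)))"
      unfolding sum_distrib_right
      by (intro sum.cong refl) (simp add: power_add[symmetric] mult_ac)
    finally show "norm (fps_nth (P * Q) k) * \<rho> ^ k \<le> \<dots>" .
  qed
  also have "\<dots> = (\<Sum>(i,j)\<in>{(i,j). i + j < N}. (norm (fps_nth P i) * \<rho> ^ i) * (norm (fps_nth Q j) * \<rho> ^ j))"
    by (rule sum.triangle_reindex[symmetric])
  also have "\<dots> \<le> (\<Sum>(i,j)\<in>{..<N} \<times> {..<N}. (norm (fps_nth P i) * \<rho> ^ i) * (norm (fps_nth Q j) * \<rho> ^ j))"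
    using r by (intro sum_mono2) auto
  also have "\<dots> = N1 \<rho> N P * N1 \<rho> N Q"
    unfolding N1_def sum_product sum.cartesian_product by simp
  finally show ?thesis .
qed

lemma N1_one: "N1 \<rho> N 1 \<le> 1"
proof -
  have "N1 \<rho> N 1 = (\<Sum>k\<in>{..<N}. if k = 0 then 1 else 0)"
    unfolding N1_def by (intro sum.cong) auto
  also have "\<dots> \<le> 1" by (simp only: sum.delta finite_lessThan) simp
  finally show ?thesis .
qed

lemma N1_power:
  assumes r: "0 \<le> \<rho>"
  shows "N1 \<rho> N (W ^ i) \<le> N1 \<rho> N W ^ i"
proof (induction i)
  case 0 then show ?case using N1_one by simp
next
  case (Suc i)
  have "N1 \<rho> N (W ^ Suc i) \<le> N1 \<rho> N W * N1 \<rho> N (W ^ i)"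
    using N1_mult[OF r, where P=W and Q="W ^ i"] by simp
  also have "\<dots> \<le> N1 \<rho> N W * N1 \<rho> N W ^ i"
    by (rule mult_left_mono[OF Suc.IH N1_nonneg[OF r]])
  finally show ?case by simp
qed

lemma fps_power_nth_vanish:
  fixes W :: "'a::comm_ring_1 fps"
  assumes "fps_nth W 0 = 0"
  shows "k < i \<Longrightarrow> fps_nth (W ^ i) k = 0"
proof (induction i arbitrary: k)
  case 0 then show ?case by simp
next
  case (Suc i)
  have "fps_nth (W ^ Suc i) k = (\<Sum>j=0..k. fps_nth W j * fps_nth (W ^ i) (k - j))"
    by (simp add: fps_mult_nth)
  also have "\<dots> = 0"
  proof (intro sum.neutral ballI)
    fix j assume j: "j \<in> {0..k}"
    show "fps_nth W j * fps_nth (W ^ i) (k - j) = 0"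
    proof (cases "j = 0")
      case True then show ?thesis using assms by simp
    next
      case False
      then have "k - j < i" using Suc.prems j by auto
      then show ?thesis using Suc.IH by simp
    qed
  qed
  finally show ?case .
qed

lemma compose_trunc:
  fixes B W :: "complex fps"
  assumes W0: "fps_nth W 0 = 0" and k: "k < N"
  shows "fps_nth (fps_compose B W) k = fps_nth (\<Sum>i<N. fps_const (fps_nth B i) * W ^ i) k"
proof -
  have "fps_nth (fps_compose B W) k = (\<Sum>i=0..k. fps_nth B i * fps_nth (W ^ i) k)"
    by (rule fps_compose_nth)
  also have "\<dots> = (\<Sum>i<N. fps_nth B i * fps_nth (W ^ i) k)"
  proof (rule sum.mono_neutral_left)
    show "\<forall>i\<in>{..<N} - {0..k}. fps_nth B i * fps_nth (W ^ i) k = 0"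
      using fps_power_nth_vanish[OF W0] by auto
  qed (use k in auto)
  also have "\<dots> = fps_nth (\<Sum>i<N. fps_const (fps_nth B i) * W ^ i) k"
    by (simp add: fps_sum_nth)
  finally show ?thesis .
qed


lemma N2_contraction:
  assumes w: "w holomorphic_on ball 0 1" and r: "0 \<le> \<rho>" "\<rho> < 1"
    and wb: "\<And>t. norm (w (of_real \<rho> * cis t)) \<le> \<rho>"
  shows "N2 \<rho> N (fps_expansion w 0 * Q) \<le> \<rho>^2 * N2 \<rho> N Q"
proof -
  define p where "p = Poly (map (\<lambda>k. fps_nth Q k) [0..<N])"
  have pc: "coeff p k = (if k < N then fps_nth Q k else 0)" for k
    by (simp add: p_def nth_default_def)
  have hq: "poly p holomorphic_on ball 0 1"
    using poly_holomorphic_on[OF holomorphic_on_id[of "ball 0 1"], of p] by simp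
  have "eval_fps (fps_of_poly p) = poly p" by (rule ext) simp
  then have "poly p has_fps_expansion fps_of_poly p"
    using eval_fps_has_fps_expansion[of "fps_of_poly p"] by simp
  then have qe: "fps_expansion (poly p) 0 = fps_of_poly p" by (rule fps_expansion_eqI)
  define W where "W = fps_expansion w 0"
  have eqk: "fps_nth (W * Q) k = fps_nth (W * fps_of_poly p) k" if "k < N" for k
    unfolding fps_mult_nth using that by (intro sum.cong refl) (simp add: pc)
  note C = contraction[OF w hq r wb, unfolded qe, folded W_def]
  have "N2 \<rho> N (W * Q) = (\<Sum>k<N. norm (fps_nth (W * fps_of_poly p) k) ^ 2 * \<rho> ^ (2 * k))"
    unfolding N2_def by (intro sum.cong refl) (simp add: eqk)
  also have "\<dots> \<le> (\<Sum>k. norm (fps_nth (W * fps_of_poly p) k) ^ 2 * \<rho> ^ (2 * k))"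
    by (rule sum_le_suminf[OF C(2)]) auto
  also have "\<dots> \<le> \<rho> ^ 2 * (\<Sum>n. norm (fps_nth (fps_of_poly p) n) ^ 2 * \<rho> ^ (2 * n))"
    by (rule C(1))
  also have "(\<Sum>n. norm (fps_nth (fps_of_poly p) n) ^ 2 * \<rho> ^ (2 * n)) = N2 \<rho> N Q"
    unfolding N2_def by (subst suminf_finite[of "{..<N}"]) (auto simp: pc)
  finally show ?thesis unfolding W_def .
qed

lemma N2_const_plus:
  assumes "fps_nth P 0 = 0"
  shows "N2 \<rho> N (fps_const c + P) \<le> norm c ^ 2 + N2 \<rho> N P"
proof (cases N)
  case 0 then show ?thesis by (simp add: N2_def)
next
  case (Suc N')
  then show ?thesis using assms by (simp add: N2_def sum.lessThan_Suc_shift del: sum.lessThan_Suc)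
qed

lemma horner_N2:
  assumes W0: "fps_nth W 0 = 0" and C: "\<And>Q. N2 \<rho> N (W * Q) \<le> \<rho>^2 * N2 \<rho> N Q" and r: "0 \<le> \<rho>"
  shows "N2 \<rho> N (\<Sum>i<M. fps_const (b i) * W ^ i) \<le> (\<Sum>i<M. norm (b i) ^ 2 * \<rho> ^ (2 * i))"
proof (induction M arbitrary: b)
  case 0 then show ?case by (simp add: N2_def)
next
  case (Suc M)
  define S where "S = (\<Sum>i<M. fps_const (b (Suc i)) * W ^ i)"
  have e: "(\<Sum>i<Suc M. fps_const (b i) * W ^ i) = fps_const (b 0) + W * S"
    unfolding S_def by (simp add: sum.lessThan_Suc_shift sum_distrib_left mult_ac del: sum.lessThan_Suc)
  have z: "fps_nth (W * S) 0 = 0" using W0 by (simp add: fps_mult_nth)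
  have "N2 \<rho> N (\<Sum>i<Suc M. fps_const (b i) * W ^ i) \<le> norm (b 0) ^ 2 + N2 \<rho> N (W * S)"
    unfolding e by (rule N2_const_plus[OF z])
  also have "\<dots> \<le> norm (b 0) ^ 2 + \<rho>^2 * N2 \<rho> N S"
    using C[of S] by simp
  also have "\<dots> \<le> norm (b 0) ^ 2 + \<rho>^2 * (\<Sum>i<M. norm (b (Suc i)) ^ 2 * \<rho> ^ (2 * i))"
    using Suc.IH[of "\<lambda>i. b (Suc i)"] unfolding S_def
    by (intro add_left_mono mult_left_mono) auto
  also have "\<dots> = (\<Sum>i<Suc M. norm (b i) ^ 2 * \<rho> ^ (2 * i))"
    by (simp add: sum.lessThan_Suc_shift sum_distrib_left power_add power_mult power_mult_distrib mult_ac del: sum.lessThan_Suc)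
  finally show ?case .
qed

lemma horner_N1:
  assumes r: "0 \<le> \<rho>" and WN: "N1 \<rho> N W \<le> \<rho>"
  shows "N1 \<rho> N (\<Sum>i<M. fps_const (b i) * W ^ i) \<le> (\<Sum>i<M. norm (b i) * \<rho> ^ i)"
proof -
  have "N1 \<rho> N (\<Sum>i<M. fps_const (b i) * W ^ i) \<le> (\<Sum>i<M. N1 \<rho> N (fps_const (b i) * W ^ i))"
    by (rule N1_sum[OF r])
  also have "\<dots> \<le> (\<Sum>i<M. norm (b i) * \<rho> ^ i)"
  proof (rule sum_mono)
    fix i
    have "N1 \<rho> N (W ^ i) \<le> \<rho> ^ i"
      using N1_power[OF r, of N W i] power_mono[OF WN N1_nonneg[OF r], of i] by linarith
    then show "N1 \<rho> N (fps_const (b i) * W ^ i) \<le> norm (b i) * \<rho> ^ i"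
      unfolding N1_cmult by (intro mult_left_mono) auto
  qed
  finally show ?thesis .
qed

lemma series_fps:
  fixes a :: "nat \<Rightarrow> complex" and h :: "complex \<Rightarrow> complex"
  assumes h: "\<And>z. z \<in> ball 0 1 \<Longrightarrow> (\<lambda>n. a n * z ^ n) sums h z"
  shows "h has_fps_expansion Abs_fps a"
  unfolding has_fps_expansion_def
proof
  have "summable (\<lambda>n. a n * (1/2::complex) ^ n)" using h[of "1/2"] sums_summable by simp
  then have "ereal (norm (1/2::complex)) \<le> conv_radius a" by (rule conv_radius_geI)
  then have "ereal (1/2) \<le> conv_radius a" by simp
  moreover have "(0::ereal) < ereal (1/2)" by simp
  ultimately have "0 < conv_radius a" by (rule order.strict_trans2[rotated])
  then show "fps_conv_radius (Abs_fps a) > 0"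
    unfolding fps_conv_radius_def by simp
  show "eventually (\<lambda>z. eval_fps (Abs_fps a) z = h z) (nhds 0)"
  proof -
    have "eventually (\<lambda>z. z \<in> ball (0::complex) 1) (nhds 0)"
      by (rule eventually_nhds_in_open) auto
    then show ?thesis by eventually_elim (auto simp: eval_fps_def intro!: sums_unique[symmetric] h)
  qed
qed


theorem lemma2:
  fixes f g :: "complex \<Rightarrow> complex" and a b :: "nat \<Rightarrow> complex" and r :: real
  assumes "f holomorphic_on ball 0 1" and "g holomorphic_on ball 0 1"
    and "\<And>z. z \<in> ball 0 1 \<Longrightarrow> (\<lambda>n. a n * z ^ n) sums f z"
    and "\<And>z. z \<in> ball 0 1 \<Longrightarrow> (\<lambda>n. b n * z ^ n) sums g z"
    and "subordinate f g"
    and "0 \<le> r" and "r \<le> 1/3"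
  shows "(\<Sum>n. norm (a n) * r ^ n)
           + (1 / (1 + norm (a 0)) + r / (1 - r)) * (\<Sum>n. norm (a (Suc n)) ^ 2 * r ^ (2 * Suc n))
         \<le> (\<Sum>n. norm (b n) * r ^ n)
           + (1 / (1 + norm (a 0)) + r / (1 - r)) * (\<Sum>n. norm (b (Suc n)) ^ 2 * r ^ (2 * Suc n))"
proof -
  note hf = assms(1) and hg = assms(2) and sa = assms(3) and sb = assms(4)
  have r: "0 \<le> r" "r \<le> 1/3" "r < 1" using assms(6,7) by auto
  obtain w where hw: "w holomorphic_on ball 0 1" and wball: "w ` ball 0 1 \<subseteq> ball 0 1"
    and w0: "w 0 = 0" and fgw: "\<And>z. z \<in> ball 0 1 \<Longrightarrow> f z = g (w z)"
    using assms(5) unfolding subordinate_def by blast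
  have wlt: "norm (w z) < 1" if "norm z < 1" for z
  proof -
    have "z \<in> ball 0 1" using that by simp
    then have "w z \<in> ball 0 1" using wball by blast
    then show ?thesis by simp
  qed
  have wle: "norm (w z) \<le> norm z" if "norm z < 1" for z
    by (rule Schwarz_Lemma(1)[OF hw w0 wlt that])
  have "norm (deriv w 0) \<le> 1"
    by (rule Schwarz_Lemma(2)[OF hw w0 wlt, of 0]) auto
  then have c1: "norm (cf w 1) \<le> 1" by (simp add: fps_expansion_def)
  define W where "W = fps_expansion w 0"
  have W0: "fps_nth W 0 = 0" using w0 by (simp add: W_def cf0)
  have Bf: "g has_fps_expansion Abs_fps b" by (rule series_fps[OF sb])
  have Af: "(g \<circ> w) has_fps_expansion Abs_fps a"
    by (rule series_fps) (use sa fgw in auto)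
  have "(g \<circ> w) has_fps_expansion fps_compose (Abs_fps b) W"
    unfolding W_def by (rule has_fps_expansion_compose[OF Bf hol_fps[OF hw]]) (use W0 W_def in simp)
  then have AB: "Abs_fps a = fps_compose (Abs_fps b) W"
    using Af fps_expansion_unique_complex by blast
  have bcf: "cf g n = b n" for n using fps_expansion_eqI[OF Bf] by simp
  have "f has_fps_expansion Abs_fps a" by (rule series_fps[OF sa])
  then have acf: "cf f n = a n" for n using fps_expansion_eqI by fastforce
  have a0b0: "a 0 = b 0" using arg_cong[OF AB, of "\<lambda>F. fps_nth F 0"] by simp
  define P where "P N = (\<Sum>i<N. fps_const (b i) * W ^ i)" for N
  have aP: "a k = fps_nth (P N) k" if "k < N" for k N
    using compose_trunc[OF W0 that, of "Abs_fps b"] arg_cong[OF AB, of "\<lambda>F. fps_nth F k"]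
    by (simp add: P_def)
  have sa1: "summable (\<lambda>n. norm (a n) * r ^ n)"
    using hol_abs_summable[OF hf r(1) r(3)] by (simp add: acf)
  have sb1: "summable (\<lambda>n. norm (b n) * r ^ n)"
    using hol_abs_summable[OF hg r(1) r(3)] by (simp add: bcf)
  have sa2: "summable (\<lambda>n. norm (a n) ^ 2 * r ^ (2 * n))"
    using hol_parseval(2)[OF hf r(1) r(3)] by (simp add: acf)
  have sb2: "summable (\<lambda>n. norm (b n) ^ 2 * r ^ (2 * n))"
    using hol_parseval(2)[OF hg r(1) r(3)] by (simp add: bcf)
  have WN: "N1 r N W \<le> r" for N
    unfolding N1_def W_def using bohr_w[OF hw w0 wle c1 r(1) r(2)] by simp
  have part1: "(\<Sum>n. norm (a n) * r ^ n) \<le> (\<Sum>n. norm (b n) * r ^ n)"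
  proof (rule suminf_le_const[OF sa1])
    fix N
    have "(\<Sum>k<N. norm (a k) * r ^ k) = N1 r N (P N)"
      unfolding N1_def by (intro sum.cong refl) (simp add: aP)
    also have "\<dots> \<le> (\<Sum>i<N. norm (b i) * r ^ i)"
      unfolding P_def by (rule horner_N1[OF r(1) WN])
    also have "\<dots> \<le> (\<Sum>n. norm (b n) * r ^ n)"
      by (rule sum_le_suminf[OF sb1]) (use r in auto)
    finally show "(\<Sum>k<N. norm (a k) * r ^ k) \<le> (\<Sum>n. norm (b n) * r ^ n)" .
  qed
  have wb: "norm (w (of_real r * cis t)) \<le> r" for t
    using wle[of "of_real r * cis t"] r by (simp add: norm_mult)
  have C: "N2 r N (W * Q) \<le> r^2 * N2 r N Q" for N Q
    unfolding W_def by (rule N2_contraction[OF hw r(1) r(3) wb])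
  have part2: "(\<Sum>n. norm (a n) ^ 2 * r ^ (2 * n)) \<le> (\<Sum>n. norm (b n) ^ 2 * r ^ (2 * n))"
  proof (rule suminf_le_const[OF sa2])
    fix N
    have "(\<Sum>k<N. norm (a k) ^ 2 * r ^ (2 * k)) = N2 r N (P N)"
      unfolding N2_def by (intro sum.cong refl) (simp add: aP)
    also have "\<dots> \<le> (\<Sum>i<N. norm (b i) ^ 2 * r ^ (2 * i))"
      unfolding P_def by (rule horner_N2[OF W0 C r(1)])
    also have "\<dots> \<le> (\<Sum>n. norm (b n) ^ 2 * r ^ (2 * n))"
      by (rule sum_le_suminf[OF sb2]) (use r in auto)
    finally show "(\<Sum>k<N. norm (a k) ^ 2 * r ^ (2 * k)) \<le> (\<Sum>n. norm (b n) ^ 2 * r ^ (2 * n))" .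
  qed
  have ta: "(\<Sum>n. norm (a (Suc n)) ^ 2 * r ^ (2 * Suc n)) = (\<Sum>n. norm (a n) ^ 2 * r ^ (2 * n)) - norm (a 0) ^ 2"
    using suminf_split_head[OF sa2] by simp
  have tb: "(\<Sum>n. norm (b (Suc n)) ^ 2 * r ^ (2 * Suc n)) = (\<Sum>n. norm (b n) ^ 2 * r ^ (2 * n)) - norm (b 0) ^ 2"
    using suminf_split_head[OF sb2] by simp
  have T: "(\<Sum>n. norm (a (Suc n)) ^ 2 * r ^ (2 * Suc n)) \<le> (\<Sum>n. norm (b (Suc n)) ^ 2 * r ^ (2 * Suc n))"
    unfolding ta tb a0b0 using part2 by linarith
  have K: "0 \<le> 1 / (1 + norm (a 0)) + r / (1 - r)"
    using r by (intro add_nonneg_nonneg divide_nonneg_nonneg) auto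
  show ?thesis
    by (rule add_mono[OF part1 mult_left_mono[OF T K]])
qed


end
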